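(* For integers $n\ge1$ and $1\le k\le n$ define $X^{n,k}(z,\bar z)=\frac{1}{k!}\frac{\partial^{k-1}}{\partial z^{k-1}}\big[z^{n-k}(1-z\bar z)^k\big]$ ($z,\bar z$ treated as independent variables). Then $$\frac{\partial X^{n,k}}{\partial z}=Z^{n,k},\qquad \frac{\partial X^{n,k}}{\partial \bar z}=-Z^{n,k-1},\qquad X^{n,k}=\frac1k\big(Z^{n-1,k-1}-\bar z\,Z^{n,k-1}\big),$$ and $X^{n,k}(t,\bar t)=0$ for all $|t|=1$.
   Context: Identify $\mathbb R^2$ with $\mathbb C$ via $z=x^1+ix^2$, $\bar z=x^1-ix^2$, with Wirtinger derivatives $\frac{\partial}{\partial z}=\frac12\big(\frac{\partial}{\partial x^1}-i\frac{\partial}{\partial x^2}\big)$, $\frac{\partial}{\partial \bar z}=\frac12\big(\frac{\partial}{\partial x^1}+i\frac{\partial}{\partial x^2}\big)$. Zernike polynomials (in the paper's numbering) are defined for integers $n\ge 0$, $0\le k\le n$ by $$Z^{n,k}(z,\bar z)=\sum_{s=0}^{k}\binom{k}{s}\binom{n-k}{s}z^{n-k-s}(1-z\bar z)^s(-\bar z)^{k-s}\quad\text{for }0\le k\le [n/2],$$ and $Z^{n,k}=(-1)^n\,\overline{Z^{n,n-k}}$ for $[n/2]<k\le n$, where $[\cdot]$ is the integer part. *)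

theory Defs
  imports "HOL-Analysis.Analysis"
begin

text \<open>Zernike polynomials as polynomial functions of two independent complex
variables z and w, where w plays the role of the conjugate variable zbar.
The first branch is the explicit sum (valid for 0 <= k <= [n/2]).\<close>

definition zernike_low :: "nat \<Rightarrow> nat \<Rightarrow> complex \<Rightarrow> complex \<Rightarrow> complex" where
  "zernike_low n k z w =
     (\<Sum>s = 0..k. of_nat (k choose s) * of_nat ((n - k) choose s)
        * z ^ (n - k - s) * (1 - z * w) ^ s * (- w) ^ (k - s))"

text \<open>For [n/2] < k <= n: Z^{n,k} = (-1)^n conj(Z^{n,n-k}). Since the low-branch
polynomials have real (integer) coefficients, conjugation of the polynomial in
(z, zbar) amounts to swapping the two variables.\<close>

definition zernike :: "nat \<Rightarrow> nat \<Rightarrow> complex \<Rightarrow> complex \<Rightarrow> complex" where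
  "zernike n k z w =
     (if k \<le> n div 2 then zernike_low n k z w
      else (-1) ^ n * zernike_low n (n - k) w z)"

definition zernikeX :: "nat \<Rightarrow> nat \<Rightarrow> complex \<Rightarrow> complex \<Rightarrow> complex" where
  "zernikeX n k z w =
     (deriv ^^ (k - 1)) (\<lambda>\<zeta>. \<zeta> ^ (n - k) * (1 - \<zeta> * w) ^ k) z / of_nat (fact k)"

end

theory Submission
  imports Defs "HOL-Complex_Analysis.Complex_Analysis"
begin

lemma choose_suc_aux: "(p choose Suc m) * Suc m = (p choose m) * (p - m)"
  by (metis binomial_absorption binomial_absorb_comp mult.commute)

lemma hd_poly:
  "(deriv ^^ m) (\<lambda>\<zeta>. \<Sum>j\<in>J. c j * \<zeta> ^ p j) z
     = (\<Sum>j\<in>J. c j * of_nat (fact m * (p j choose m)) * (z::complex) ^ (p j - m))"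
proof (induction m arbitrary: z)
  case 0
  then show ?case by simp
next
  case (Suc m)
  have "(deriv ^^ Suc m) (\<lambda>\<zeta>. \<Sum>j\<in>J. c j * \<zeta> ^ p j) z
      = deriv (\<lambda>z. \<Sum>j\<in>J. c j * of_nat (fact m * (p j choose m)) * z ^ (p j - m)) z"
    unfolding funpow.simps o_apply by (rule arg_cong[where f="\<lambda>g. deriv g z"], rule ext, rule Suc.IH)
  also have "\<dots> = (\<Sum>j\<in>J. c j * of_nat (fact m * (p j choose m)) * (of_nat (p j - m) * z ^ (p j - m - 1)))"
    by (rule DERIV_imp_deriv) (auto intro!: derivative_eq_intros sum.cong simp: mult_ac)
  also have "\<dots> = (\<Sum>j\<in>J. c j * of_nat (fact (Suc m) * (p j choose Suc m)) * z ^ (p j - Suc m))"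
  proof (rule sum.cong[OF refl])
    fix j
    have "fact m * (p j choose m) * (p j - m) = fact (Suc m) * (p j choose Suc m)"
    proof -
      have "fact (Suc m) * (p j choose Suc m) = fact m * ((p j choose Suc m) * Suc m)"
        by (simp add: fact_Suc algebra_simps)
      also have "\<dots> = fact m * ((p j choose m) * (p j - m))" by (simp only: choose_suc_aux)
      finally show ?thesis by (simp add: mult.assoc)
    qed
    then have "(of_nat (fact m * (p j choose m)) * of_nat (p j - m) :: complex)
        = of_nat (fact (Suc m) * (p j choose Suc m))" by (metis of_nat_mult)
    then show "c j * of_nat (fact m * (p j choose m)) * (of_nat (p j - m) * z ^ (p j - m - 1))
        = c j * of_nat (fact (Suc m) * (p j choose Suc m)) * z ^ (p j - Suc m)"
    proof -
      have e: "p j - m - 1 = p j - Suc m" by simp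
      have "c j * of_nat (fact m * (p j choose m)) * (of_nat (p j - m) * z ^ (p j - m - 1))
          = c j * (of_nat (fact m * (p j choose m)) * of_nat (p j - m)) * z ^ (p j - m - 1)"
        by (simp only: mult_ac)
      also have "\<dots> = c j * of_nat (fact (Suc m) * (p j choose Suc m)) * z ^ (p j - Suc m)"
        by (simp only: e \<open>(of_nat (fact m * (p j choose m)) * of_nat (p j - m) :: complex)
        = of_nat (fact (Suc m) * (p j choose Suc m))\<close>)
      finally show ?thesis .
    qed
  qed
  finally show ?case .
qed

lemma hd_pow:
  "(deriv ^^ m) (\<lambda>\<zeta>. \<zeta> ^ p) z = of_nat (fact m * (p choose m)) * (z::complex) ^ (p - m)"
  using hd_poly[of m "\<lambda>_. 1" "\<lambda>_. p" "{0::nat}" z] by simp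

lemma hd_lin:
  "(deriv ^^ m) (\<lambda>\<zeta>. (1 - \<zeta> * w) ^ k) z = of_nat (fact m * (k choose m)) * (-w) ^ m * (1 - (z::complex) * w) ^ (k - m)"
proof (induction m arbitrary: z)
  case 0
  then show ?case by simp
next
  case (Suc m)
  have "(deriv ^^ Suc m) (\<lambda>\<zeta>. (1 - \<zeta> * w) ^ k) z
      = deriv (\<lambda>z. of_nat (fact m * (k choose m)) * (-w) ^ m * (1 - (z::complex) * w) ^ (k - m)) z"
    unfolding funpow.simps o_apply by (rule arg_cong[where f="\<lambda>g. deriv g z"], rule ext, rule Suc.IH)
  also have "\<dots> = of_nat (fact m * (k choose m)) * (-w) ^ m * (of_nat (k - m) * (1 - z * w) ^ (k - m - 1) * (- w))"
    by (rule DERIV_imp_deriv) (auto intro!: derivative_eq_intros)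
  also have "\<dots> = of_nat (fact (Suc m) * (k choose Suc m)) * (-w) ^ Suc m * (1 - z * w) ^ (k - Suc m)"
  proof -
    have "fact m * (k choose m) * (k - m) = fact (Suc m) * (k choose Suc m)"
    proof -
      have "fact (Suc m) * (k choose Suc m) = fact m * ((k choose Suc m) * Suc m)"
        by (simp add: fact_Suc algebra_simps)
      also have "\<dots> = fact m * ((k choose m) * (k - m))" by (simp only: choose_suc_aux)
      finally show ?thesis by (simp add: mult.assoc)
    qed
    then have "(of_nat (fact m * (k choose m)) * of_nat (k - m) :: complex)
        = of_nat (fact (Suc m) * (k choose Suc m))" by (metis of_nat_mult)
    note eq = this
    have e: "k - m - 1 = k - Suc m" by simp
    have "of_nat (fact m * (k choose m)) * (-w) ^ m * (of_nat (k - m) * (1 - z * w) ^ (k - m - 1) * (- w))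
       = (of_nat (fact m * (k choose m)) * of_nat (k - m)) * ((-w) ^ m * (- w)) * (1 - z * w) ^ (k - m - 1)"
      by (simp only: mult_ac)
    also have "\<dots> = of_nat (fact (Suc m) * (k choose Suc m)) * (-w) ^ Suc m * (1 - z * w) ^ (k - Suc m)"
      by (simp only: eq e power_Suc2)
    finally show ?thesis .

  qed
  finally show ?case .
qed


lemma rodrigues:
  assumes "k \<le> n"
  shows "(deriv ^^ k) (\<lambda>\<zeta>. \<zeta> ^ (n - k) * (1 - \<zeta> * w) ^ k) z / fact k = zernike_low n k z w"
proof -
  have "(deriv ^^ k) (\<lambda>\<zeta>. \<zeta> ^ (n - k) * (1 - \<zeta> * w) ^ k) z
     = (\<Sum>i = 0..k. of_nat (k choose i) * (deriv ^^ i) (\<lambda>\<zeta>. \<zeta> ^ (n - k)) z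
            * (deriv ^^ (k - i)) (\<lambda>\<zeta>. (1 - \<zeta> * w) ^ k) z)"
    by (rule higher_deriv_mult[of _ UNIV]) (auto intro!: holomorphic_intros)
  also have "\<dots> = (\<Sum>i = 0..k. of_nat (fact k) * (of_nat (k choose i) * of_nat ((n - k) choose i)
        * z ^ (n - k - i) * (1 - z * w) ^ i * (- w) ^ (k - i)))"
  proof (rule sum.cong[OF refl])
    fix i assume "i \<in> {0..k}"
    then have ik: "i \<le> k" by simp
    have s: "k choose (k - i) = k choose i" using binomial_symmetric[OF ik] by simp
    have e: "k - (k - i) = i" using ik by simp
    have f: "(of_nat (fact i) * of_nat (fact (k - i)) * of_nat (k choose i) :: complex) = of_nat (fact k)"
      using binomial_fact_lemma[OF ik] by (metis of_nat_mult)
    have "of_nat (k choose i) * (deriv ^^ i) (\<lambda>\<zeta>. \<zeta> ^ (n - k)) z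
            * (deriv ^^ (k - i)) (\<lambda>\<zeta>. (1 - \<zeta> * w) ^ k) z
        = (of_nat (fact i) * of_nat (fact (k - i)) * of_nat (k choose i)) * (of_nat (k choose i) * of_nat ((n - k) choose i)
        * z ^ (n - k - i) * (1 - z * w) ^ i * (- w) ^ (k - i))"
      by (simp only: hd_pow hd_lin s e of_nat_mult mult_ac)
    also have "\<dots> = of_nat (fact k) * (of_nat (k choose i) * of_nat ((n - k) choose i)
        * z ^ (n - k - i) * (1 - z * w) ^ i * (- w) ^ (k - i))" by (simp only: f)
    finally show "of_nat (k choose i) * (deriv ^^ i) (\<lambda>\<zeta>. \<zeta> ^ (n - k)) z
            * (deriv ^^ (k - i)) (\<lambda>\<zeta>. (1 - \<zeta> * w) ^ k) z
        = of_nat (fact k) * (of_nat (k choose i) * of_nat ((n - k) choose i)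
        * z ^ (n - k - i) * (1 - z * w) ^ i * (- w) ^ (k - i))" .
  qed
  also have "\<dots> = of_nat (fact k) * zernike_low n k z w"
    unfolding zernike_low_def by (simp only: sum_distrib_left)
  finally show ?thesis by simp
qed

lemma zernike_eq_low:
  assumes "k \<le> n"
  shows "zernike n k z w = zernike_low n k z w"
proof (cases "k \<le> n div 2")
  case True
  then show ?thesis by (simp add: zernike_def)
next
  case False
  then have nk: "n - k \<le> k" by auto
  have "zernike_low n k z w = (\<Sum>s = 0..n - k. of_nat (k choose s) * of_nat ((n - k) choose s)
        * z ^ (n - k - s) * (1 - z * w) ^ s * (- w) ^ (k - s))"
    unfolding zernike_low_def
    by (rule sum.mono_neutral_right) (use nk in auto)
  also have "\<dots> = (\<Sum>s = 0..n - k. (-1) ^ n * (of_nat ((n - k) choose s) * of_nat ((n - (n - k)) choose s)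
        * w ^ (n - (n - k) - s) * (1 - w * z) ^ s * (- z) ^ (n - k - s)))"
  proof (rule sum.cong[OF refl])
    fix s assume "s \<in> {0..n - k}"
    then have s1: "s \<le> n - k" by simp
    then have s2: "s \<le> k" using nk by simp
    have e1: "n - (n - k) = k" using assms by simp
    have "n = (n - k - s) + (k - s) + 2 * s" using s1 s2 assms by simp
    then have sg: "(-1::complex) ^ n = (-1) ^ (n - k - s) * (-1) ^ (k - s)"
      by (metis (no_types, lifting) mult_1_right power_add power_mult neg_one_power_add_eq_neg_one_power_diff power2_minus power_one)
    show "of_nat (k choose s) * of_nat ((n - k) choose s)
        * z ^ (n - k - s) * (1 - z * w) ^ s * (- w) ^ (k - s)
       = (-1) ^ n * (of_nat ((n - k) choose s) * of_nat ((n - (n - k)) choose s)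
        * w ^ (n - (n - k) - s) * (1 - w * z) ^ s * (- z) ^ (n - k - s))"
    proof -
      have pw: "(-w)^(k-s) = (-1)^(k-s) * w^(k-s)" by (rule power_minus)
      have pz: "(-z)^(n-k-s) = (-1)^(n-k-s) * z^(n-k-s)" by (rule power_minus)
      have c: "1 - w*z = 1 - z*w" by (simp add: mult.commute)
      have m1: "(-1::complex)^(n-k-s) * (-1)^(n-k-s) = 1" by (simp flip: power_mult_distrib)
      show ?thesis unfolding sg e1 pw pz c by (simp only: mult_ac) (simp only: m1 mult_1_right)
    qed
  qed
  also have "\<dots> = (-1) ^ n * zernike_low n (n - k) w z"
    unfolding zernike_low_def by (simp only: sum_distrib_left)
  finally show ?thesis using False by (simp add: zernike_def)
qed

lemma expand_f:
  "(\<lambda>\<zeta>. \<zeta> ^ p * (1 - \<zeta> * w) ^ k) = (\<lambda>\<zeta>. \<Sum>j\<le>k. (of_nat (k choose j) * (-w) ^ j) * (\<zeta>::complex) ^ (p + j))"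
proof
  fix \<zeta> :: complex
  have "(1 - \<zeta> * w) ^ k = ((-w) * \<zeta> + 1) ^ k" by (simp add: algebra_simps)
  also have "\<dots> = (\<Sum>j\<le>k. of_nat (k choose j) * ((-w) * \<zeta>) ^ j * 1 ^ (k - j))"
    by (rule binomial_ring)
  finally show "\<zeta> ^ p * (1 - \<zeta> * w) ^ k = (\<Sum>j\<le>k. (of_nat (k choose j) * (-w) ^ j) * \<zeta> ^ (p + j))"
    by (auto simp add: sum_distrib_left power_mult_distrib power_add power_minus[of "\<zeta> * w"] power_minus[of w] mult_ac intro!: sum.cong)
qed

lemma hd_full:
  "(deriv ^^ m) (\<lambda>\<zeta>. \<zeta> ^ p * (1 - \<zeta> * w) ^ k) z
    = (\<Sum>j\<le>k. (of_nat (k choose j) * (-w) ^ j) * of_nat (fact m * ((p + j) choose m)) * (z::complex) ^ (p + j - m))"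
  unfolding expand_f by (rule hd_poly)


theorem mainTheorem4:
  fixes n k :: nat
  assumes "1 \<le> n" and "1 \<le> k" and "k \<le> n"
  shows "(\<forall>z w. deriv (\<lambda>\<zeta>. zernikeX n k \<zeta> w) z = zernike n k z w)
       \<and> (\<forall>z w. deriv (\<lambda>\<omega>. zernikeX n k z \<omega>) w = - zernike n (k - 1) z w)
       \<and> (\<forall>z w. zernikeX n k z w
              = (zernike (n - 1) (k - 1) z w - w * zernike n (k - 1) z w) / of_nat k)
       \<and> (\<forall>t. cmod t = 1 \<longrightarrow> zernikeX n k t (cnj t) = 0)"
proof -
  obtain k' where kk: "k = Suc k'" using assms(2) by (cases k) auto
  define f where "f = (\<lambda>w \<zeta>. \<zeta> ^ (n - k) * (1 - \<zeta> * w) ^ k :: complex)"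
  have hol: "f w holomorphic_on UNIV" for w unfolding f_def by (auto intro!: holomorphic_intros)
  have X: "zernikeX n k z w = (deriv ^^ k') (f w) z / of_nat (fact k)" for z w
    unfolding zernikeX_def f_def kk by simp
  have fk: "(fact k :: complex) = of_nat k * fact k'" unfolding kk by (simp add: fact_Suc)
  have P1: "deriv (\<lambda>\<zeta>. zernikeX n k \<zeta> w) z = zernike n k z w" for z w
  proof -
    have "((\<lambda>\<zeta>. zernikeX n k \<zeta> w) has_field_derivative (deriv ^^ Suc k') (f w) z / of_nat (fact k)) (at z)"
      unfolding X
      by (rule DERIV_cdivide, rule has_field_derivative_higher_deriv[OF hol]) auto
    then have "deriv (\<lambda>\<zeta>. zernikeX n k \<zeta> w) z = (deriv ^^ Suc k') (f w) z / of_nat (fact k)"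
      by (rule DERIV_imp_deriv)
    also have "\<dots> = (deriv ^^ k) (f w) z / fact k" by (simp only: kk[symmetric] of_nat_fact)
    also have "\<dots> = zernike n k z w"
      unfolding f_def using rodrigues[OF assms(3)] zernike_eq_low[OF assms(3)] by simp
    finally show ?thesis .
  qed
  have P3: "zernikeX n k z w = (zernike (n - 1) (k - 1) z w - w * zernike n (k - 1) z w) / of_nat k" for z w
  proof -
    define g1 where "g1 = (\<lambda>\<zeta>. \<zeta> ^ (n - k) * (1 - \<zeta> * w) ^ k' :: complex)"
    define g2 where "g2 = (\<lambda>\<zeta>. \<zeta> ^ (n - k') * (1 - \<zeta> * w) ^ k' :: complex)"
    have h1: "g1 holomorphic_on UNIV" "g2 holomorphic_on UNIV" "(\<lambda>\<zeta>. w * g2 \<zeta>) holomorphic_on UNIV"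
      unfolding g1_def g2_def by (auto intro!: holomorphic_intros)
    have z1: "zernike (n - 1) (k - 1) z w = (deriv ^^ k') g1 z / fact k'"
    proof -
      have "n - 1 - k' = n - k" using kk by simp
      then show ?thesis unfolding g1_def
        using rodrigues[of k' "n - 1" w z] zernike_eq_low[of k' "n - 1" z w] assms kk by simp
    qed
    have z2: "zernike n (k - 1) z w = (deriv ^^ k') g2 z / fact k'"
      unfolding g2_def
      using rodrigues[of k' n w z] zernike_eq_low[of k' n z w] assms kk by simp
    have fe: "(\<lambda>\<zeta>. g1 \<zeta> - w * g2 \<zeta>) = f w"
    proof
      fix \<zeta>
      have "n - k' = Suc (n - k)" using kk assms by simp
      then show "g1 \<zeta> - w * g2 \<zeta> = f w \<zeta>" unfolding g1_def g2_def f_def kk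
        by (simp add: algebra_simps)
    qed
    have "(deriv ^^ k') g1 z - w * (deriv ^^ k') g2 z = (deriv ^^ k') (\<lambda>\<zeta>. g1 \<zeta> - w * g2 \<zeta>) z"
      using higher_deriv_diff[OF h1(1) h1(3), of z k'] higher_deriv_cmult[OF h1(2), of z k' w] by simp
    then have "(deriv ^^ k') g1 z - w * (deriv ^^ k') g2 z = (deriv ^^ k') (f w) z"
      using fe by simp
    then show ?thesis unfolding X z1 z2
      by (simp add: fk field_simps diff_divide_distrib[symmetric])
  qed
  have P4: "zernikeX n k t (cnj t) = 0" if "cmod t = 1" for t
  proof -
    have tc: "1 - t * cnj t = 0" using complex_norm_square[of t] that by simp
    have "(deriv ^^ k') (f (cnj t)) t
        = (\<Sum>i = 0..k'. of_nat (k' choose i) * (deriv ^^ i) (\<lambda>\<zeta>. \<zeta> ^ (n - k)) t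
            * (deriv ^^ (k' - i)) (\<lambda>\<zeta>. (1 - \<zeta> * cnj t) ^ k) t)"
      unfolding f_def by (rule higher_deriv_mult[of _ UNIV]) (auto intro!: holomorphic_intros)
    also have "\<dots> = 0"
    proof (rule sum.neutral, rule ballI)
      fix i assume "i \<in> {0..k'}"
      then have "k - (k' - i) = Suc (k - Suc (k' - i))" using kk by simp
      then show "of_nat (k' choose i) * (deriv ^^ i) (\<lambda>\<zeta>. \<zeta> ^ (n - k)) t
            * (deriv ^^ (k' - i)) (\<lambda>\<zeta>. (1 - \<zeta> * cnj t) ^ k) t = 0"
        by (simp only: hd_lin tc) simp
    qed
    finally show ?thesis unfolding X by simp
  qed
  have P2: "deriv (\<lambda>\<omega>. zernikeX n k z \<omega>) w = - zernike n (k - 1) z w" for z w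
  proof -
    have Xe: "(\<lambda>\<omega>. zernikeX n k z \<omega>) = (\<lambda>\<omega>. (\<Sum>j\<le>k. (of_nat (k choose j) * (-\<omega>) ^ j) * of_nat (fact k' * ((n - k + j) choose k')) * z ^ (n - k + j - k')) / of_nat (fact k))"
      unfolding X f_def hd_full by simp
    have "((\<lambda>\<omega>. zernikeX n k z \<omega>) has_field_derivative
        (\<Sum>j\<le>k. (of_nat (k choose j) * (of_nat j * (-w) ^ (j - 1) * (-1))) * of_nat (fact k' * ((n - k + j) choose k')) * z ^ (n - k + j - k')) / of_nat (fact k)) (at w)"
      unfolding Xe by (auto intro!: derivative_eq_intros sum.cong simp: mult_ac)
    then have "deriv (\<lambda>\<omega>. zernikeX n k z \<omega>) w = (\<Sum>j\<le>k. (of_nat (k choose j) * (of_nat j * (-w) ^ (j - 1) * (-1))) * of_nat (fact k' * ((n - k + j) choose k')) * z ^ (n - k + j - k')) / of_nat (fact k)"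
      by (rule DERIV_imp_deriv)
    also have "\<dots> = - zernike n (k - 1) z w"
    proof -
      define S where "S = (\<Sum>i\<le>k'. (of_nat (k' choose i) * (-w) ^ i) * of_nat (fact k' * ((n - k' + i) choose k')) * z ^ (n - k' + i - k'))"
      have R: "zernike n (k - 1) z w = S / fact k'"
        unfolding S_def using rodrigues[of k' n w z] zernike_eq_low[of k' n z w] hd_full[of k' "n - k'" w k' z] assms kk by simp
      have "(\<Sum>j\<le>k. (of_nat (k choose j) * (of_nat j * (-w) ^ (j - 1) * (-1))) * of_nat (fact k' * ((n - k + j) choose k')) * z ^ (n - k + j - k'))
          = (\<Sum>i\<le>k'. (of_nat (k choose Suc i) * (of_nat (Suc i) * (-w) ^ (Suc i - 1) * (-1))) * of_nat (fact k' * ((n - k + Suc i) choose k')) * z ^ (n - k + Suc i - k'))"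
        unfolding kk by (subst sum.atMost_Suc_shift) simp
      also have "\<dots> = - of_nat k * S"
        unfolding S_def sum_distrib_left
      proof (rule sum.cong[OF refl])
        fix i
        have e1: "n - k + Suc i = n - k' + i" using kk assms by simp
        have e2: "Suc i - 1 = i" by simp
        have c: "(of_nat (k choose Suc i) * of_nat (Suc i) :: complex) = of_nat k * of_nat (k' choose i)"
          unfolding kk using Suc_times_binomial[of i k'] by (metis mult.commute of_nat_mult)
        have "(of_nat (k choose Suc i) * (of_nat (Suc i) * (-w) ^ (Suc i - 1) * (-1))) * of_nat (fact k' * ((n - k + Suc i) choose k')) * z ^ (n - k + Suc i - k')
           = - ((of_nat (k choose Suc i) * of_nat (Suc i)) * ((-w) ^ i * (of_nat (fact k' * ((n - k' + i) choose k')) * z ^ (n - k' + i - k'))))"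
          unfolding e1 e2 by (simp only: mult_ac mult_minus_right mult_1_right) simp
        also have "\<dots> = - of_nat k * ((of_nat (k' choose i) * (-w) ^ i) * of_nat (fact k' * ((n - k' + i) choose k')) * z ^ (n - k' + i - k'))"
          unfolding c by (simp only: mult_ac mult_minus_left)
        finally show "(of_nat (k choose Suc i) * (of_nat (Suc i) * (-w) ^ (Suc i - 1) * (-1))) * of_nat (fact k' * ((n - k + Suc i) choose k')) * z ^ (n - k + Suc i - k')
           = - of_nat k * ((of_nat (k' choose i) * (-w) ^ i) * of_nat (fact k' * ((n - k' + i) choose k')) * z ^ (n - k' + i - k'))" .
      qed
      finally have L: "(\<Sum>j\<le>k. (of_nat (k choose j) * (of_nat j * (-w) ^ (j - 1) * (-1))) * of_nat (fact k' * ((n - k + j) choose k')) * z ^ (n - k + j - k'))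
          = - of_nat k * S" .
      have k0: "(of_nat k :: complex) \<noteq> 0" using assms(2) by simp
      show ?thesis unfolding L R of_nat_fact fk using k0 by simp
    qed
    finally show ?thesis .
  qed
  show ?thesis using P1 P2 P3 P4 by blast
qed

end
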